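(* Let $k\ge2$ and let $\mathcal C_2$ be the binary $(2k+1,k)$ code with generator matrix $G_c=(e_1\ \ e_1\ \ e_1+e_2\ \ e_2\ \ e_2+e_3\ \ e_3\ \cdots\ e_{k-1}+e_k\ \ e_k\ \ e_k)$. Then every erasure pattern with at most $2$ erasures allows for parallel $3$-repair.
   Context: $e_i$ denotes the $i$-th standard unit vector of $\mathbb F_2^k$; $\mathcal C_2$ has minimum distance $3$. Let $g_1,\dots,g_{2k+1}$ be the columns of $G_c$; nodes are the coordinates of codewords $c=uG_c$. An erasure pattern is a set of erased nodes; the others are live. A node $c_i$ is related to distinct nodes $c_{j_1},\dots,c_{j_\gamma}$ (all different from $c_i$) if $g_i=g_{j_1}+\dots+g_{j_\gamma}$. An erased node allows for $r$-repair if it is related to $\gamma\le r$ live nodes. An erasure pattern allows for parallel $r$-repair if each erased node allows for $r$-repair with respect to the original set of live nodes. *)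

theory Defs
  imports Main "HOL-Library.Z2"
begin

text \<open>Vectors of F_2^k are represented as functions nat => bit supported on {1..k}.\<close>

definition unitv :: "nat \<Rightarrow> nat \<Rightarrow> bit" where
  "unitv i = (\<lambda>l. if l = i then 1 else 0)"

definition vadd :: "(nat \<Rightarrow> bit) \<Rightarrow> (nat \<Rightarrow> bit) \<Rightarrow> nat \<Rightarrow> bit" where
  "vadd u v = (\<lambda>l. u l + v l)"

text \<open>Columns g_1 .. g_{2k+1} of G_c =
  (e_1, e_1, e_1+e_2, e_2, e_2+e_3, e_3, ..., e_{k-1}+e_k, e_k, e_k).\<close>
definition gcol :: "nat \<Rightarrow> nat \<Rightarrow> nat \<Rightarrow> bit" where
  "gcol k j =
     (if j = 1 then unitv 1
      else if j = 2 * k + 1 then unitv k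
      else if even j then unitv (j div 2)
      else vadd (unitv ((j - 1) div 2)) (unitv ((j + 1) div 2)))"

definition nodes :: "nat \<Rightarrow> nat set" where
  "nodes k = {1..2 * k + 1}"

definition related :: "nat \<Rightarrow> nat \<Rightarrow> nat set \<Rightarrow> bool" where
  "related k i J \<longleftrightarrow> i \<in> nodes k \<and> J \<subseteq> nodes k \<and> i \<notin> J \<and>
     gcol k i = (\<lambda>l. \<Sum>j\<in>J. gcol k j l)"

definition allows_repair :: "nat \<Rightarrow> nat \<Rightarrow> nat set \<Rightarrow> nat \<Rightarrow> bool" where
  "allows_repair k r E i \<longleftrightarrow>
     (\<exists>J. related k i J \<and> card J \<le> r \<and> J \<subseteq> nodes k - E)"

definition allows_parallel_repair :: "nat \<Rightarrow> nat \<Rightarrow> nat set \<Rightarrow> bool" where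
  "allows_parallel_repair k r E \<longleftrightarrow> (\<forall>i\<in>E. allows_repair k r E i)"

end

theory Submission
  imports Defs
begin

lemma g_one: "gcol k 1 = unitv 1" by (simp add: gcol_def)
lemma g_one': "gcol k (Suc 0) = unitv (Suc 0)" by (simp add: gcol_def)
lemma g_last: "k \<ge> 1 \<Longrightarrow> gcol k (2*k+1) = unitv k" by (simp add: gcol_def)
lemma g_even: "1 \<le> m \<Longrightarrow> m \<le> k \<Longrightarrow> gcol k (2*m) = unitv m"
  by (simp add: gcol_def)
lemma g_odd: "1 \<le> m \<Longrightarrow> m < k \<Longrightarrow> gcol k (2*m+1) = vadd (unitv m) (unitv (m+1))"
  by (simp add: gcol_def)

lemma rel1: "i \<in> nodes k \<Longrightarrow> a \<in> nodes k \<Longrightarrow> i \<noteq> a \<Longrightarrow> gcol k i = gcol k a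
   \<Longrightarrow> related k i {a}"
  by (simp add: related_def del: add_bit_eq_xor)
lemma rel2: "i \<in> nodes k \<Longrightarrow> a \<in> nodes k \<Longrightarrow> b \<in> nodes k \<Longrightarrow> i \<noteq> a \<Longrightarrow> i \<noteq> b
   \<Longrightarrow> a \<noteq> b \<Longrightarrow> gcol k i = (\<lambda>l. gcol k a l + gcol k b l)
   \<Longrightarrow> related k i {a,b}"
  by (simp add: related_def del: add_bit_eq_xor)
lemma rel3: "i \<in> nodes k \<Longrightarrow> a \<in> nodes k \<Longrightarrow> b \<in> nodes k \<Longrightarrow> c \<in> nodes k
   \<Longrightarrow> i \<noteq> a \<Longrightarrow> i \<noteq> b \<Longrightarrow> i \<noteq> c
   \<Longrightarrow> a \<noteq> b \<Longrightarrow> a \<noteq> c \<Longrightarrow> b \<noteq> c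
   \<Longrightarrow> gcol k i = (\<lambda>l. gcol k a l + gcol k b l + gcol k c l)
   \<Longrightarrow> related k i {a,b,c}"
  by (simp add: related_def add.assoc del: add_bit_eq_xor)

lemma bitadd_self[simp]: "(x::bit) + x = 0" by (cases x) auto

lemma key:
  assumes k: "k \<ge> 2" and i: "i \<in> nodes k"
  shows "\<exists>J. related k i J \<and> card J \<le> 3 \<and> j \<notin> J"
proof -
  have i1: "1 \<le> i" "i \<le> 2*k+1" using i by (auto simp: nodes_def)
  consider "i = 1" | "i = 2*k+1" | m where "i = 2*m" "1 \<le> m" "m \<le> k"
    | m where "i = 2*m+1" "1 \<le> m" "m < k"
  proof -
    assume a1: "i = 1 \<Longrightarrow> thesis" and a2: "i = 2*k+1 \<Longrightarrow> thesis"
      and a3: "\<And>m. i = 2*m \<Longrightarrow> 1 \<le> m \<Longrightarrow> m \<le> k \<Longrightarrow> thesis"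
      and a4: "\<And>m. i = 2*m+1 \<Longrightarrow> 1 \<le> m \<Longrightarrow> m < k \<Longrightarrow> thesis"
    show thesis
    proof (cases "even i")
      case True
      then obtain m where "i = 2*m" by blast
      then show ?thesis using a3[of m] i1 by auto
    next
      case False
      then obtain m where "i = 2*m+1" using oddE by blast
      then show ?thesis using a1 a2 a4[of m] i1 by (cases "m = 0"; cases "m = k") auto
    qed
  qed
  then show ?thesis
  proof cases
    case 1
    show ?thesis
    proof (cases "j = 2")
      case False
      have "related k i {2}" using 1 k
        by (intro rel1) (auto simp: nodes_def g_one' g_even[of 1 k, simplified])
      then show ?thesis using False by auto
    next
      case True
      have "related k i {3,4}" using 1 k
        by (intro rel2) (auto simp: nodes_def g_one' g_even[of 2 k, simplified]
            g_odd[of 1 k, simplified] vadd_def unitv_def)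
      then show ?thesis using True by (auto simp: card_insert_if)
    qed
  next
    case 2
    show ?thesis
    proof (cases "j = 2*k")
      case False
      have "related k i {2*k}" using 2 k
        by (intro rel1) (auto simp: nodes_def gcol_def unitv_def vadd_def fun_eq_iff)
      then show ?thesis using False by auto
    next
      case True
      have "related k i {2*k-1,2*k-2}" using 2 k
        by (intro rel2) (auto simp: nodes_def gcol_def unitv_def vadd_def fun_eq_iff)
      moreover have "card {2*k-1,2*k-2} \<le> 3" by (auto simp: card_insert_if)
      moreover have "j \<notin> {2*k-1,2*k-2}" using True k by auto
      ultimately show ?thesis by blast
    qed
  next
    case (3 m)
    show ?thesis
    proof (cases "m = 1")
      case True
      show ?thesis
      proof (cases "j = 1")
        case False
        have "related k i {1}" using 3 k True by (intro rel1) (auto simp: nodes_def gcol_def unitv_def vadd_def fun_eq_iff)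
        then show ?thesis using False by auto
      next
        case True
        have "related k i {3,4}" using 3 k \<open>m=1\<close> by (intro rel2) (auto simp: nodes_def gcol_def unitv_def vadd_def fun_eq_iff)
        then show ?thesis using True by (auto simp: card_insert_if)
      qed
    next
      case m1: False
      show ?thesis
      proof (cases "m = k")
        case True
        show ?thesis
        proof (cases "j = 2*k+1")
          case False
          have "related k i {2*k+1}" using 3 k True by (intro rel1) (auto simp: nodes_def gcol_def unitv_def vadd_def fun_eq_iff)
          then show ?thesis using False by auto
        next
          case True
          have "related k i {2*m-1,2*m-2}" using 3 k \<open>m=k\<close> m1 by (intro rel2) (auto simp: nodes_def gcol_def unitv_def vadd_def fun_eq_iff)
          then show ?thesis using True 3 by (auto simp: card_insert_if)
        qed
      next
        case mk: False
        show ?thesis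
        proof (cases "j = 2*m-1 \<or> j = 2*m-2")
          case False
          have "related k i {2*m-1,2*m-2}" using 3 k m1 mk by (intro rel2) (auto simp: nodes_def gcol_def unitv_def vadd_def fun_eq_iff)
          then show ?thesis using False by (auto simp: card_insert_if)
        next
          case True
          have "related k i {2*m+1,2*m+2}" using 3 k m1 mk by (intro rel2) (auto simp: nodes_def gcol_def unitv_def vadd_def fun_eq_iff)
          then show ?thesis using True 3 m1 by (auto simp: card_insert_if)
        qed
      qed
    qed
  next
    case (4 m)
    have m1: "1 \<le> m" and mk: "m < k" using 4 by auto
    have iq: "i = 2*m+1" using 4 by simp
    have N: "\<And>x. 1 \<le> x \<Longrightarrow> x \<le> 2*k+1 \<Longrightarrow> x \<in> nodes k" by (simp add: nodes_def)
    have fi: "gcol k (2*m+1) = vadd (unitv m) (unitv (m+1))" using g_odd[OF m1 mk] .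
    have fa: "gcol k (2*m) = unitv m" using g_even[OF m1] mk by simp
    have fb: "gcol k (2*m+2) = unitv (m+1)" using g_even[of "m+1" k] mk by (simp add: algebra_simps)
    have rA: "related k i {2*m, 2*m+2}" unfolding iq
    proof (rule rel2)
      show "gcol k (2*m+1) = (\<lambda>l. gcol k (2*m) l + gcol k (2*m+2) l)"
        by (simp only: fi fa fb) (auto simp: fun_eq_iff unitv_def vadd_def)
    qed (use m1 mk in \<open>auto intro!: N\<close>)
    obtain B where rB: "related k i B" and cB: "card B \<le> 3" and jB: "2*m \<notin> B"
    proof (cases "m = 1")
      case True
      have f1: "gcol k 1 = unitv m" using True by (simp add: g_one')
      have "related k i {1, 2*m+2}" unfolding iq
      proof (rule rel2)
        show "gcol k (2*m+1) = (\<lambda>l. gcol k 1 l + gcol k (2*m+2) l)"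
          by (simp only: fi f1 fb) (auto simp: fun_eq_iff unitv_def vadd_def)
      qed (use m1 mk in \<open>auto intro!: N\<close>)
      moreover have "card {1::nat, 2*m+2} \<le> 3" by (auto simp: card_insert_if)
      moreover have "2*m \<notin> {1::nat, 2*m+2}" using m1 by auto
      ultimately show ?thesis using that by blast
    next
      case False
      have m2: "1 \<le> m - 1" "m - 1 < k" using False m1 mk by auto
      have fc: "gcol k (2*m-1) = vadd (unitv (m-1)) (unitv m)"
      proof -
        have e: "2*(m-1)+1 = 2*m-1" "m-1+1 = m" using False m1 by auto
        show ?thesis using g_odd[OF m2] unfolding e .
      qed
      have fd: "gcol k (2*m-2) = unitv (m-1)"
      proof -
        have e: "2*(m-1) = 2*m-2" by auto
        show ?thesis using g_even[of "m-1" k] m2 unfolding e by simp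
      qed
      have "related k i {2*m-1, 2*m-2, 2*m+2}" unfolding iq
      proof (rule rel3)
        show "gcol k (2*m+1) = (\<lambda>l. gcol k (2*m-1) l + gcol k (2*m-2) l + gcol k (2*m+2) l)"
          by (simp only: fi fc fd fb) (use False m1 in \<open>auto simp: fun_eq_iff unitv_def vadd_def\<close>)
      qed (use m1 mk False in \<open>auto intro!: N\<close>)
      moreover have "card {2*m-1, 2*m-2, 2*m+2::nat} \<le> 3" by (auto simp: card_insert_if)
      moreover have "2*m \<notin> {2*m-1, 2*m-2, 2*m+2::nat}" using m1 by auto
      ultimately show ?thesis using that by blast
    qed
    obtain C where rC: "related k i C" and cC: "card C \<le> 3" and jC: "2*m+2 \<notin> C"
    proof (cases "m + 1 = k")
      case True
      have f1: "gcol k (2*k+1) = unitv (m+1)" using True by (simp add: gcol_def)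
      have "related k i {2*m, 2*k+1}" unfolding iq
      proof (rule rel2)
        show "gcol k (2*m+1) = (\<lambda>l. gcol k (2*m) l + gcol k (2*k+1) l)"
          by (simp only: fi f1 fa) (auto simp: fun_eq_iff unitv_def vadd_def)
      qed (use m1 mk in \<open>auto intro!: N\<close>)
      moreover have "card {2*m, 2*k+1::nat} \<le> 3" by (auto simp: card_insert_if)
      moreover have "2*m+2 \<notin> {2*m, 2*k+1::nat}" using True by auto
      ultimately show ?thesis using that by blast
    next
      case False
      have m2: "1 \<le> m + 1" "m + 1 < k" using False m1 mk by auto
      have fc: "gcol k (2*m+3) = vadd (unitv (m+1)) (unitv (m+2))"
      proof -
        have e: "2*(m+1)+1 = 2*m+3" "m+1+1 = m+2" by auto
        show ?thesis using g_odd[OF m2] unfolding e .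
      qed
      have fd: "gcol k (2*m+4) = unitv (m+2)"
      proof -
        have e: "2*(m+2) = 2*m+4" by auto
        show ?thesis using g_even[of "m+2" k] m2 unfolding e by simp
      qed
      have "related k i {2*m, 2*m+3, 2*m+4}" unfolding iq
      proof (rule rel3)
        show "gcol k (2*m+1) = (\<lambda>l. gcol k (2*m) l + gcol k (2*m+3) l + gcol k (2*m+4) l)"
          by (simp only: fi fc fd fa) (auto simp: fun_eq_iff unitv_def vadd_def)
      qed (use m1 mk False in \<open>auto intro!: N\<close>)
      moreover have "card {2*m, 2*m+3, 2*m+4::nat} \<le> 3" by (auto simp: card_insert_if)
      moreover have "2*m+2 \<notin> {2*m, 2*m+3, 2*m+4::nat}" by auto
      ultimately show ?thesis using that by blast
    qed
    show ?thesis
    proof (cases "j = 2*m")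
      case True
      then show ?thesis using rB cB jB by blast
    next
      case jm: False
      show ?thesis
      proof (cases "j = 2*m+2")
        case True
        then show ?thesis using rC cC jC by blast
      next
        case False
        then show ?thesis using rA jm by (intro exI[of _ "{2*m,2*m+2}"]) (auto simp: card_insert_if)
      qed
    qed
  qed
qed

theorem theorem4p4:
  fixes k :: nat and E :: "nat set"
  assumes "k \<ge> 2"
    and "E \<subseteq> nodes k"
    and "card E \<le> 2"
  shows "allows_parallel_repair k 3 E"
  unfolding allows_parallel_repair_def allows_repair_def
proof
  fix i assume iE: "i \<in> E"
  have fin: "finite E" using assms(2) finite_subset by (auto simp: nodes_def)
  have "\<exists>j. E \<subseteq> {i, j}"
  proof (cases "E - {i} = {}")
    case True then show ?thesis by blast
  next
    case False
    then obtain j where j: "j \<in> E - {i}" by blast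
    have "{i,j} \<subseteq> E" using j iE by auto
    moreover have "card {i,j} = 2" using j by auto
    ultimately have "E = {i,j}" using fin assms(3)
      by (metis card_seteq)
    then show ?thesis by blast
  qed
  then obtain j where Ej: "E \<subseteq> {i,j}" by blast
  obtain J where J: "related k i J" "card J \<le> 3" "j \<notin> J"
    using key[OF assms(1), of i j] iE assms(2) by blast
  have "J \<subseteq> nodes k - E" using J Ej unfolding related_def by blast
  then show "\<exists>J. related k i J \<and> card J \<le> 3 \<and> J \<subseteq> nodes k - E" using J by blast
qed

end
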